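(* Let $S$ and $T$ be finite sets and $E\subseteq S\times T$. For each $(s,t)\in E$ let $X_{st}$ be a random variable with distribution $\mathrm{Beta}(1+\alpha_{st},1+\beta_{st})$ (with $\alpha_{st},\beta_{st}\ge 0$), the $X_{st}$ being independent. For $y\in\mathbb{R}^S_{+}$ and $x\in[0,1]^E$ define \[ \mathcal I(y;x)=\sum_{t\in T}\Big(1-\prod_{(s,t)\in E} x_{st}^{\,y(s)}\Big). \] Let $\mathcal Y\subseteq\mathbb{R}^S_+$ be convex. Then both problems $\max_{y\in\mathcal Y}\mathcal I(y;\mathbb{E}[X])$ and $\max_{y\in\mathcal Y}\mathbb{E}[\mathcal I(y;X)]$ are concave maximization problems over the convex set $\mathcal Y$, i.e. the functions $y\mapsto \mathcal I(y;\mathbb{E}[X])$ and $y\mapsto\mathbb{E}[\mathcal I(y;X)]$ are concave on $\mathcal Y$.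
   Context: $x_{st}$ is interpreted as the failure probability of the edge $(s,t)$ in a bipartite influence graph, and $y(s)$ as the budget assigned to channel $s$; $\mathcal I(y;x)$ is the expected number of influenced nodes of $T$. *)

theory Defs
  imports "HOL-Probability.Probability"
begin

definition rpow :: "real \<Rightarrow> real \<Rightarrow> real" where
  "rpow x y = (if y = 0 then 1 else x powr y)"

definition beta_density :: "real \<Rightarrow> real \<Rightarrow> real \<Rightarrow> ennreal" where
  "beta_density a b x =
     ennreal (indicator {0<..<1} x * x powr a * (1 - x) powr b / Beta (1 + a) (1 + b))"

definition influence :: "('s \<times> 't) set \<Rightarrow> real ^ 's \<Rightarrow> ('s \<times> 't \<Rightarrow> real) \<Rightarrow> real" where
  "influence E y x = (\<Sum>t\<in>(UNIV::'t set). 1 - (\<Prod>s\<in>{s. (s, t) \<in> E}. rpow (x (s, t)) (y $ s)))"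

end

theory Submission
  imports Defs
begin

definition cc :: "real \<Rightarrow> real" where "cc v = (if v = 0 then 0 else ln v)"

lemma rpow_alt: "rpow v w = (if v = 0 \<and> w \<noteq> 0 then 0 else exp (w * cc v))"
  by (simp add: rpow_def powr_def cc_def)

lemma prod_alt:
  "(\<Prod>s\<in>A. rpow (x s) (y $ s)) =
    (if \<exists>s\<in>A. x s = 0 \<and> y $ s \<noteq> 0 then 0 else exp (\<Sum>s\<in>A. y $ s * cc (x s)))"
  if "finite A"
proof (cases "\<exists>s\<in>A. x s = 0 \<and> y $ s \<noteq> 0")
  case True
  then show ?thesis using that by (auto simp: rpow_alt intro!: prod_zero)
next
  case False
  then have "(\<Prod>s\<in>A. rpow (x s) (y $ s)) = (\<Prod>s\<in>A. exp (y $ s * cc (x s)))"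
    by (intro prod.cong) (auto simp: rpow_alt)
  then show ?thesis using False that by (simp add: exp_sum)
qed

lemma prod_convex:
  fixes y z :: "real ^ 's::finite"
  assumes "\<forall>s. 0 \<le> y $ s" "\<forall>s. 0 \<le> z $ s" "0 < t" "t < 1"
  shows "(\<Prod>s\<in>A. rpow (x s) (((1 - t) *\<^sub>R y + t *\<^sub>R z) $ s))
     \<le> (1 - t) * (\<Prod>s\<in>A. rpow (x s) (y $ s)) + t * (\<Prod>s\<in>A. rpow (x s) (z $ s))"
proof -
  have fA: "finite A" by simp
  define u where "u = (1 - t) *\<^sub>R y + t *\<^sub>R z"
  have nn: "0 \<le> (1 - t) * (\<Prod>s\<in>A. rpow (x s) (y $ s)) + t * (\<Prod>s\<in>A. rpow (x s) (z $ s))"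
    using assms by (simp add: prod_alt[OF fA])
  show ?thesis
  proof (cases "\<exists>s\<in>A. x s = 0 \<and> u $ s \<noteq> 0")
    case True
    then show ?thesis using nn by (simp add: prod_alt[OF fA] u_def[symmetric])
  next
    case False
    have yz: "y $ s = 0 \<and> z $ s = 0" if "s \<in> A" "x s = 0" for s
    proof -
      have "(1 - t) * y $ s + t * z $ s = 0" using False that by (simp add: u_def)
      moreover have "0 \<le> (1 - t) * y $ s" "0 \<le> t * z $ s" using assms by auto
      ultimately show ?thesis using assms by (simp add: add_nonneg_eq_0_iff)
    qed
    have lin: "(\<Sum>s\<in>A. u $ s * cc (x s)) = (1 - t) * (\<Sum>s\<in>A. y $ s * cc (x s)) + t * (\<Sum>s\<in>A. z $ s * cc (x s))"
      unfolding sum_distrib_left sum.distrib[symmetric]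
      by (rule sum.cong) (auto simp: u_def algebra_simps)
    have "exp ((1 - t) * (\<Sum>s\<in>A. y $ s * cc (x s)) + t * (\<Sum>s\<in>A. z $ s * cc (x s)))
       \<le> (1 - t) * exp (\<Sum>s\<in>A. y $ s * cc (x s)) + t * exp (\<Sum>s\<in>A. z $ s * cc (x s))"
      using convex_onD[OF exp_convex, of t] assms by simp
    moreover have n1: "\<not> (\<exists>s\<in>A. x s = 0 \<and> y $ s \<noteq> 0)" and n2: "\<not> (\<exists>s\<in>A. x s = 0 \<and> z $ s \<noteq> 0)"
      using yz by auto
    ultimately show ?thesis
      unfolding prod_alt[OF fA] u_def[symmetric] lin if_not_P[OF False] if_not_P[OF n1] if_not_P[OF n2]
      by simp
  qed
qed

lemma infl_concave:
  fixes y z :: "real ^ 's::finite"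
  assumes "\<forall>s. 0 \<le> y $ s" "\<forall>s. 0 \<le> z $ s" "0 < t" "t < 1"
  shows "(1 - t) * influence E y x + t * influence E z x
     \<le> influence E ((1 - t) *\<^sub>R y + t *\<^sub>R z) (x :: 's \<times> 't::finite \<Rightarrow> real)"
proof -
  have "(1 - t) * influence E y x + t * influence E z x =
     (\<Sum>t'\<in>UNIV. 1 - ((1 - t) * (\<Prod>s\<in>{s. (s, t') \<in> E}. rpow (x (s, t')) (y $ s))
        + t * (\<Prod>s\<in>{s. (s, t') \<in> E}. rpow (x (s, t')) (z $ s))))"
    unfolding influence_def sum_distrib_left sum.distrib[symmetric]
    by (rule sum.cong) (auto simp: algebra_simps)
  also have "\<dots> \<le> influence E ((1 - t) *\<^sub>R y + t *\<^sub>R z) x"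
    unfolding influence_def
    by (intro sum_mono diff_left_mono prod_convex[OF assms])
  finally show ?thesis .
qed

lemma concI:
  assumes "convex Y" "Y \<subseteq> {y. \<forall>s. 0 \<le> y $ s}"
    and "\<And>t y z. 0 < t \<Longrightarrow> t < 1 \<Longrightarrow> \<forall>s. 0 \<le> y $ s \<Longrightarrow> \<forall>s. 0 \<le> z $ s \<Longrightarrow>
        (1 - t) * f y + t * f z \<le> f ((1 - t) *\<^sub>R y + t *\<^sub>R (z :: real ^ 's::finite))"
  shows "concave_on Y f"
  unfolding concave_on_def
  by (rule convex_onI[OF _ assms(1)]) (use assms(2,3) in force)

theorem proposition2:
  fixes E :: "('s::finite \<times> 't::finite) set"
    and \<alpha> \<beta> :: "'s \<times> 't \<Rightarrow> real"
    and M :: "'w measure"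
    and X :: "'s \<times> 't \<Rightarrow> 'w \<Rightarrow> real"
    and Y :: "(real ^ 's) set"
  assumes "prob_space M"
    and "\<And>e. e \<in> E \<Longrightarrow> \<alpha> e \<ge> 0 \<and> \<beta> e \<ge> 0"
    and "\<And>e. e \<in> E \<Longrightarrow> distributed M lborel (X e) (beta_density (\<alpha> e) (\<beta> e))"
    and "prob_space.indep_vars M (\<lambda>_. borel) X E"
    and "Y \<subseteq> {y. \<forall>s. 0 \<le> y $ s}"
    and "convex Y"
  shows "concave_on Y (\<lambda>y. influence E y (\<lambda>e. prob_space.expectation M (X e)))
       \<and> concave_on Y (\<lambda>y. prob_space.expectation M (\<lambda>\<omega>. influence E y (\<lambda>e. X e \<omega>)))"
proof
  show "concave_on Y (\<lambda>y. influence E y (\<lambda>e. prob_space.expectation M (X e)))"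
    by (rule concI[OF assms(6,5)]) (rule infl_concave)
next
  interpret prob_space M by fact
  have Xm: "X e \<in> borel_measurable M" if "e \<in> E" for e
    using distributed_measurable[OF assms(3)[OF that]] by simp
  have AE1: "AE \<omega> in M. X e \<omega> \<in> {0<..<1}" if e: "e \<in> E" for e
  proof (rule AE_I')
    define N where "N = X e -` (UNIV - {0<..<1}) \<inter> space M"
    have "emeasure M N = (\<integral>\<^sup>+x. beta_density (\<alpha> e) (\<beta> e) x * indicator (UNIV - {0<..<1}) x \<partial>lborel)"
      unfolding N_def by (rule distributed_emeasure[OF assms(3)[OF e]]) simp
    also have "(\<lambda>x. beta_density (\<alpha> e) (\<beta> e) x * indicator (UNIV - {0<..<1}) x) = (\<lambda>_. 0)"
      by (rule ext) (simp add: beta_density_def indicator_def)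
    also have "(\<integral>\<^sup>+x. 0 \<partial>lborel) = 0" by simp
    finally have "emeasure M N = 0" .
    moreover have "N \<in> sets M" unfolding N_def using Xm[OF e] by measurable
    ultimately show "N \<in> null_sets M" by auto
    show "{x \<in> space M. \<not> X e x \<in> {0<..<1}} \<subseteq> N" unfolding N_def by auto
  qed
  have AE2: "AE \<omega> in M. \<forall>e\<in>E. X e \<omega> \<in> {0<..<1}"
    by (rule AE_finite_allI) (simp_all only: AE1 finite)
  have meas: "(\<lambda>\<omega>. influence E y (\<lambda>e. X e \<omega>)) \<in> borel_measurable M" for y :: "real ^ 's"
    unfolding influence_def rpow_def
  proof (intro borel_measurable_sum borel_measurable_diff borel_measurable_prod)
    fix t s assume "s \<in> {s. (s, t) \<in> E}"
    then have "X (s, t) \<in> borel_measurable M" using Xm by auto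
    then show "(\<lambda>\<omega>. if y $ s = 0 then 1 else X (s, t) \<omega> powr y $ s) \<in> borel_measurable M"
      by measurable
  qed simp
  have bnd: "norm (influence E y (\<lambda>e. X e \<omega>)) \<le> real CARD('t)"
    if y: "\<forall>s. 0 \<le> y $ s" and w: "\<forall>e\<in>E. X e \<omega> \<in> {0<..<1}" for y :: "real ^ 's" and \<omega>
  proof -
    have r: "0 \<le> rpow (X (s, t) \<omega>) (y $ s) \<and> rpow (X (s, t) \<omega>) (y $ s) \<le> 1"
      if "(s, t) \<in> E" for s t
      using w that y by (auto simp: rpow_def intro!: powr_le1)
    have "\<bar>1 - (\<Prod>s\<in>{s. (s, t) \<in> E}. rpow (X (s, t) \<omega>) (y $ s))\<bar> \<le> 1" for t
    proof -
      have "0 \<le> (\<Prod>s\<in>{s. (s, t) \<in> E}. rpow (X (s, t) \<omega>) (y $ s))"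
        using r by (intro prod_nonneg) auto
      moreover have "(\<Prod>s\<in>{s. (s, t) \<in> E}. rpow (X (s, t) \<omega>) (y $ s)) \<le> 1"
        using r by (intro prod_le_1) auto
      ultimately show ?thesis by simp
    qed
    then have "\<bar>influence E y (\<lambda>e. X e \<omega>)\<bar> \<le> (\<Sum>t\<in>(UNIV::'t set). 1)"
      unfolding influence_def by (intro order.trans[OF sum_abs] sum_mono) auto
    then show ?thesis by simp
  qed
  have int: "integrable M (\<lambda>\<omega>. influence E y (\<lambda>e. X e \<omega>))" if "\<forall>s. 0 \<le> y $ s" for y
    by (rule integrable_const_bound[where B="real CARD('t)"])
       (use AE2 bnd[OF that] meas in \<open>auto elim: AE_mp\<close>)
  show "concave_on Y (\<lambda>y. expectation (\<lambda>\<omega>. influence E y (\<lambda>e. X e \<omega>)))"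
  proof (rule concI[OF assms(6,5)])
    fix t :: real and y z :: "real ^ 's"
    assume h: "0 < t" "t < 1" "\<forall>s. 0 \<le> y $ s" "\<forall>s. 0 \<le> z $ s"
    have u: "\<forall>s. 0 \<le> ((1 - t) *\<^sub>R y + t *\<^sub>R z) $ s" using h by simp
    have "(1 - t) * expectation (\<lambda>\<omega>. influence E y (\<lambda>e. X e \<omega>)) + t * expectation (\<lambda>\<omega>. influence E z (\<lambda>e. X e \<omega>))
       = expectation (\<lambda>\<omega>. (1 - t) * influence E y (\<lambda>e. X e \<omega>) + t * influence E z (\<lambda>e. X e \<omega>))"
      using int[OF h(3)] int[OF h(4)] by simp
    also have "\<dots> \<le> expectation (\<lambda>\<omega>. influence E ((1 - t) *\<^sub>R y + t *\<^sub>R z) (\<lambda>e. X e \<omega>))"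
      by (rule integral_mono) (use int[OF h(3)] int[OF h(4)] int[OF u] infl_concave[OF h(3,4,1,2)] in auto)
    finally show "(1 - t) * expectation (\<lambda>\<omega>. influence E y (\<lambda>e. X e \<omega>)) + t * expectation (\<lambda>\<omega>. influence E z (\<lambda>e. X e \<omega>))
       \<le> expectation (\<lambda>\<omega>. influence E ((1 - t) *\<^sub>R y + t *\<^sub>R z) (\<lambda>e. X e \<omega>))" .
  qed
qed

end
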